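(* For each integer $n\geq 2$, the Johnson graph $J(n,2)$ satisfies $\operatorname{tww}(J(n,2))=\operatorname{lb}_1(J(n,2))$, and this value equals $2(n-3)$ if $n\geq 5$ and $0$ otherwise.
   Context: All graphs are finite and simple. The Johnson graph $J(n,2)$ has vertex set the 2-element subsets of $\{1,\dots,n\}$, two vertices $S,S'$ being adjacent iff $|S\cap S'|=1$. A trigraph is a graph whose edges are each colored red or black; a graph is viewed as a trigraph with all edges black; the red degree of a vertex is the number of red edges incident to it. For a partition $\mathcal{P}$ of $V(G)$, the quotient trigraph $G/\mathcal{P}$ has vertex set $\mathcal{P}$; two distinct parts $U,W$ are joined by a black edge if every pair $\{u,w\}$ with $u\in U,w\in W$ is a black edge of $G$, are non-adjacent if no such pair is an edge, and are joined by a red edge otherwise. A contraction sequence of an $N$-vertex trigraph $G$ is a sequence $\mathcal{P}_N,\dots,\mathcal{P}_1$ of partitions of $V(G)$ where $\mathcal{P}_N$ is the partition into singletons and each $\mathcal{P}_i$ arises from $\mathcal{P}_{i+1}$ by merging two parts; its width is the maximum red degree over all $G/\mathcal{P}_i$, and $\operatorname{tww}(G)$ is the minimum width of a contraction sequence. For $|V(G)|\geq 2$, $\operatorname{lb}_1(G)$ is the minimum over all 2-element subsets $\{u,v\}\subseteq V(G)$ of the maximum red degree of $G/\mathcal{P}$ where $\mathcal{P}$ has $\{u,v\}$ as its only non-singleton part; $\operatorname{lb}_1(G)=0$ if $|V(G)|=1$. *)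

theory Defs
  imports Main "HOL-Library.Disjoint_Sets"
begin

text \<open>A trigraph is given by a finite vertex set V, a set B of black edges and a set R
  of red edges; edges are 2-element subsets of V (B and R disjoint).
  A graph (V, E) is the trigraph (V, E, {}).\<close>

definition quot_red_adj :: "'a set set \<Rightarrow> 'a set set \<Rightarrow> 'a set set \<Rightarrow> 'a set \<Rightarrow> 'a set \<Rightarrow> bool" where
  "quot_red_adj B R P U W \<longleftrightarrow>
     U \<in> P \<and> W \<in> P \<and> U \<noteq> W \<and>
     \<not> (\<forall>u\<in>U. \<forall>w\<in>W. {u, w} \<in> B) \<and>
     (\<exists>u\<in>U. \<exists>w\<in>W. {u, w} \<in> B \<union> R)"

definition quot_red_deg :: "'a set set \<Rightarrow> 'a set set \<Rightarrow> 'a set set \<Rightarrow> 'a set \<Rightarrow> nat" where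
  "quot_red_deg B R P U = card {W. quot_red_adj B R P U W}"

definition max_red_deg :: "'a set set \<Rightarrow> 'a set set \<Rightarrow> 'a set set \<Rightarrow> nat" where
  "max_red_deg B R P = Max (insert 0 ((quot_red_deg B R P) ` P))"

definition singleton_partition :: "'a set \<Rightarrow> 'a set set" where
  "singleton_partition V = (\<lambda>x. {x}) ` V"

definition merge_step :: "'a set set \<Rightarrow> 'a set set \<Rightarrow> bool" where
  "merge_step P Q \<longleftrightarrow>
     (\<exists>U\<in>P. \<exists>W\<in>P. U \<noteq> W \<and> Q = insert (U \<union> W) (P - {U, W}))"

text \<open>A contraction sequence of an N-vertex trigraph with vertex set V, written as a list
  [P_N, P_{N-1}, ..., P_1] of partitions of V.\<close>
definition contraction_seq :: "'a set \<Rightarrow> 'a set set list \<Rightarrow> bool" where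
  "contraction_seq V ps \<longleftrightarrow>
     length ps = card V \<and>
     (\<forall>P \<in> set ps. partition_on V P) \<and>
     ps ! 0 = singleton_partition V \<and>
     (\<forall>i. Suc i < length ps \<longrightarrow> merge_step (ps ! i) (ps ! Suc i))"

definition seq_width :: "'a set set \<Rightarrow> 'a set set \<Rightarrow> 'a set set list \<Rightarrow> nat" where
  "seq_width B R ps = Max (insert 0 (max_red_deg B R ` set ps))"

definition tww :: "'a set \<Rightarrow> 'a set set \<Rightarrow> 'a set set \<Rightarrow> nat" where
  "tww V B R = (LEAST w. \<exists>ps. contraction_seq V ps \<and> seq_width B R ps = w)"

definition pair_partition :: "'a set \<Rightarrow> 'a \<Rightarrow> 'a \<Rightarrow> 'a set set" where
  "pair_partition V u v = insert {u, v} ((\<lambda>x. {x}) ` (V - {u, v}))"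

definition lb1 :: "'a set \<Rightarrow> 'a set set \<Rightarrow> 'a set set \<Rightarrow> nat" where
  "lb1 V B R = (if card V \<le> 1 then 0 else
     Min {max_red_deg B R (pair_partition V u v) | u v. u \<in> V \<and> v \<in> V \<and> u \<noteq> v})"

definition johnson_V :: "nat \<Rightarrow> nat set set" where
  "johnson_V n = {S. S \<subseteq> {1..n} \<and> card S = 2}"

definition johnson_E :: "nat \<Rightarrow> nat set set set" where
  "johnson_E n = {{S, S'} | S S'. S \<in> johnson_V n \<and> S' \<in> johnson_V n \<and> card (S \<inter> S') = 1}"

end

theory Submission
  imports Defs
begin



definition cls :: "'a set \<Rightarrow> ('a \<Rightarrow> 'b) \<Rightarrow> 'a \<Rightarrow> 'a set" where
  "cls V f u = {v\<in>V. f v = f u}"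

definition part :: "'a set \<Rightarrow> ('a \<Rightarrow> 'b) \<Rightarrow> 'a set set" where
  "part V f = cls V f ` V"

lemma part_partition: "partition_on V (part V f)"
proof (rule partition_onI)
  show "\<Union> (part V f) = V" unfolding part_def cls_def by auto
  show "{} \<notin> part V f" unfolding part_def cls_def by auto
  fix p q assume "p \<in> part V f" "q \<in> part V f" "p \<noteq> q"
  then show "disjnt p q" unfolding part_def cls_def disjnt_def by auto
qed

lemma finite_part: "finite V \<Longrightarrow> finite (part V f)"
  unfolding part_def by simp

lemma cls_eq_iff: "u \<in> V \<Longrightarrow> w \<in> V \<Longrightarrow> cls V f u = cls V f w \<longleftrightarrow> f u = f w"
proof
  assume "u \<in> V" "w \<in> V" "cls V f u = cls V f w"
  moreover have "u \<in> cls V f u" using \<open>u \<in> V\<close> by (simp add: cls_def)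
  ultimately show "f u = f w" by (simp add: cls_def)
qed (simp add: cls_def)


lemma red_deg_bound:
  assumes finL: "finite L" and u: "u \<in> V"
    and key: "\<And>u1 u2 w1 w2. u1 \<in> V \<Longrightarrow> u2 \<in> V \<Longrightarrow> w1 \<in> V \<Longrightarrow> w2 \<in> V \<Longrightarrow>
       f u1 = f u \<Longrightarrow> f u2 = f u \<Longrightarrow> f w1 = f w2 \<Longrightarrow> f w1 \<noteq> f u \<Longrightarrow>
       {u1, w1} \<in> B \<Longrightarrow> {u2, w2} \<notin> B \<Longrightarrow> f w1 \<in> L"
  shows "quot_red_deg B {} (part V f) (cls V f u) \<le> card L"
proof -
  have sub: "{W. quot_red_adj B {} (part V f) (cls V f u) W} \<subseteq> (\<lambda>l. {v\<in>V. f v = l}) ` L"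
  proof
    fix W assume "W \<in> {W. quot_red_adj B {} (part V f) (cls V f u) W}"
    then have r: "quot_red_adj B {} (part V f) (cls V f u) W" by simp
    have WP: "W \<in> part V f" and UW: "cls V f u \<noteq> W" 
     and nb: "\<not> (\<forall>x\<in>cls V f u. \<forall>y\<in>W. {x, y} \<in> B)" and ex: "\<exists>x\<in>cls V f u. \<exists>y\<in>W. {x, y} \<in> B \<union> {}"
      using r unfolding quot_red_adj_def by blast+
    obtain w where w: "w \<in> V" "W = cls V f w" using WP unfolding part_def by blast
    have ne: "f w \<noteq> f u" using UW w u cls_eq_iff[OF u w(1), of f] by simp
    obtain u2 w2 where u2: "u2 \<in> cls V f u" "w2 \<in> W" "{u2, w2} \<notin> B" using nb by blast
    obtain u1 w1 where u1: "u1 \<in> cls V f u" "w1 \<in> W" "{u1, w1} \<in> B" using ex by blast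
    have m: "u1 \<in> V" "f u1 = f u" "u2 \<in> V" "f u2 = f u" "w1 \<in> V" "f w1 = f w" "w2 \<in> V" "f w2 = f w"
      using u1 u2 w unfolding cls_def by simp_all
    have "f w1 \<in> L"
      by (rule key[of u1 u2 w1 w2]) (use m ne u1 u2 in simp_all)
    then show "W \<in> (\<lambda>l. {v\<in>V. f v = l}) ` L" using w m unfolding cls_def by auto
  qed
  have "quot_red_deg B {} (part V f) (cls V f u) \<le> card ((\<lambda>l. {v\<in>V. f v = l}) ` L)"
    unfolding quot_red_deg_def by (rule card_mono[OF _ sub]) (simp add: finL)
  also have "\<dots> \<le> card L" by (rule card_image_le[OF finL])
  finally show ?thesis .
qed

lemma part_merge:
  assumes a: "a \<in> V" and b: "b \<in> V" and ab: "f a \<noteq> f b"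
    and iff: "\<And>u v. u \<in> V \<Longrightarrow> v\<in>V \<Longrightarrow> (g u = g v) = (f u = f v \<or> (f u = f a \<and> f v = f b) \<or> (f u = f b \<and> f v = f a))"
  shows "merge_step (part V f) (part V g)"
proof -
  let ?U = "cls V f a" and ?W = "cls V f b"
  have cg: "cls V g u = (if f u = f a \<or> f u = f b then ?U \<union> ?W else cls V f u)" if u: "u \<in> V" for u
  proof (rule set_eqI)
    fix v
    show "v \<in> cls V g u \<longleftrightarrow> v \<in> (if f u = f a \<or> f u = f b then ?U \<union> ?W else cls V f u)"
    proof (cases "v \<in> V")
      case True
      have "(g v = g u) = (f v = f u \<or> (f v = f a \<and> f u = f b) \<or> (f v = f b \<and> f u = f a))"
        using iff[OF True u] .
      then show ?thesis using True ab unfolding cls_def by auto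
    qed (simp add: cls_def)
  qed
  have UW: "?U \<noteq> ?W" using cls_eq_iff[OF a b, of f] ab by simp
  have "part V g = insert (?U \<union> ?W) (part V f - {?U, ?W})"
  proof
    show "part V g \<subseteq> insert (?U \<union> ?W) (part V f - {?U, ?W})"
    proof
      fix Z assume "Z \<in> part V g"
      then obtain u where u: "u \<in> V" "Z = cls V g u" unfolding part_def by auto
      show "Z \<in> insert (?U \<union> ?W) (part V f - {?U, ?W})"
      proof (cases "f u = f a \<or> f u = f b")
        case True then show ?thesis using cg[OF u(1)] u by simp
      next
        case False
        then have "cls V f u \<noteq> ?U" "cls V f u \<noteq> ?W" using cls_eq_iff[OF u(1) a, of f] cls_eq_iff[OF u(1) b, of f] by auto
        moreover have "cls V f u \<in> part V f" using u unfolding part_def by simp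
        ultimately show ?thesis using cg[OF u(1)] u False by simp
      qed
    qed
  next
    show "insert (?U \<union> ?W) (part V f - {?U, ?W}) \<subseteq> part V g"
    proof
      fix Z assume Z: "Z \<in> insert (?U \<union> ?W) (part V f - {?U, ?W})"
      show "Z \<in> part V g"
      proof (cases "Z = ?U \<union> ?W")
        case True 
        then have "Z = cls V g a" using cg[OF a] by simp
        then show ?thesis using a unfolding part_def by simp
      next
        case False
        then have "Z \<in> part V f" "Z \<noteq> ?U" "Z \<noteq> ?W" using Z by auto
        then obtain u where u: "u \<in> V" "Z = cls V f u" unfolding part_def by auto
        have "f u \<noteq> f a" "f u \<noteq> f b" using cls_eq_iff[OF u(1) a, of f] cls_eq_iff[OF u(1) b, of f] u \<open>Z \<noteq> ?U\<close> \<open>Z \<noteq> ?W\<close> by auto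
        then have "Z = cls V g u" using cg[OF u(1)] u by simp
        then show ?thesis using u unfolding part_def by simp
      qed
    qed
  qed
  moreover have "?U \<in> part V f" "?W \<in> part V f" using a b unfolding part_def by auto
  ultimately show ?thesis unfolding merge_step_def
    apply -
    apply (rule bexI[of _ "cls V f a"])
     apply (rule bexI[of _ "cls V f b"])
    using UW by simp_all
qed


lemma part_inj: assumes inj: "inj_on f V" shows "part V f = singleton_partition V"
proof -
  have h: "cls V f x = {x}" if x: "x \<in> V" for x
  proof (rule set_eqI)
    fix v show "v \<in> cls V f x \<longleftrightarrow> v \<in> {x}"
      using inj x unfolding cls_def inj_on_def by blast
  qed
  show ?thesis unfolding part_def singleton_partition_def by (rule image_cong[OF refl h])
qed

lemma part_const:
  assumes ne: "V \<noteq> {}" and c: "\<And>u v. u \<in> V \<Longrightarrow> v\<in>V \<Longrightarrow> g u = g v"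
  shows "part V g = {V}"
proof -
  have h: "cls V g u = V" if u: "u \<in> V" for u
    unfolding cls_def using c[OF _ u] by blast
  have "part V g = (\<lambda>u. V) ` V" unfolding part_def by (rule image_cong[OF refl h])
  also have "\<dots> = {V}" using ne by blast
  finally show ?thesis .
qed


lemma max_red_deg_le:
  assumes "finite P" "\<And>U. U \<in> P \<Longrightarrow> quot_red_deg B R P U \<le> w"
  shows "max_red_deg B R P \<le> w"
  unfolding max_red_deg_def using assms by (simp add: Max_le_iff)


lemma max_red_deg_single: "max_red_deg B R {V} = 0"
  unfolding max_red_deg_def quot_red_deg_def quot_red_adj_def by simp


datatype lbl = E nat nat | Q nat | R nat | X | CC

definition L :: "nat \<Rightarrow> nat \<Rightarrow> nat \<Rightarrow> nat \<Rightarrow> lbl" where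
  "L x m a b = (if b < x then E a b else if b = x then (if a < m then Q a else R a)
     else if a < x then Q a else if a = x then X else CC)"

lemma L_E: "L x m a b = E i j \<longleftrightarrow> b < x \<and> a = i \<and> b = j" unfolding L_def by auto
lemma L_Q: "L x m a b = Q i \<longleftrightarrow> (b = x \<and> a < m \<and> a = i) \<or> (x < b \<and> a < x \<and> a = i)" unfolding L_def by auto
lemma L_R: "L x m a b = R i \<longleftrightarrow> (b = x \<and> m \<le> a \<and> a = i)" unfolding L_def by auto
lemma L_X: "L x m a b = X \<longleftrightarrow> (x < b \<and> a = x)" unfolding L_def by auto
lemma L_CC: "L x m a b = CC \<longleftrightarrow> (x < b \<and> x < a)" unfolding L_def by auto

definition adjp :: "nat \<Rightarrow> nat \<Rightarrow> nat \<Rightarrow> nat \<Rightarrow> bool" where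
  "adjp a b c d \<longleftrightarrow> (a = c \<or> a = d \<or> b = c \<or> b = d) \<and> \<not> (a = c \<and> b = d)"

definition allowed :: "nat \<Rightarrow> nat \<Rightarrow> nat \<Rightarrow> lbl \<Rightarrow> lbl set" where
  "allowed n x m l = (case l of E a b \<Rightarrow> {} | R k \<Rightarrow> Q ` {1..<m}
     | Q i \<Rightarrow> (if i < m then R ` {m..<x} else {}) \<union> Q ` ({1..<x} - {i}) \<union> (if x + 1 < n then {X, CC} else {})
     | X \<Rightarrow> insert CC (Q ` {1..<x}) | CC \<Rightarrow> insert X (Q ` {1..<x}))"


lemma adjp_sym: "adjp a b c d = adjp c d a b" unfolding adjp_def by auto

lemma H_EQ: "a < b \<Longrightarrow> c < d \<Longrightarrow> L x m a b = E i j \<Longrightarrow> L x m c d = Q k \<Longrightarrow> c < d \<Longrightarrow> adjp a b c d = (k = i \<or> k = j)"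
  unfolding L_E L_Q adjp_def by auto
lemma H_EX: "a < b \<Longrightarrow> c < d \<Longrightarrow> L x m a b = E i j \<Longrightarrow> L x m c d = X \<Longrightarrow> \<not> adjp a b c d"
  unfolding L_E L_X adjp_def by auto
lemma H_ECC: "a < b \<Longrightarrow> c < d \<Longrightarrow> L x m a b = E i j \<Longrightarrow> L x m c d = CC \<Longrightarrow> \<not> adjp a b c d"
  unfolding L_E L_CC adjp_def by auto
lemma H_RQ: "a < b \<Longrightarrow> c < d \<Longrightarrow> L x m a b = R k \<Longrightarrow> L x m c d = Q i \<Longrightarrow> m \<le> i \<Longrightarrow> adjp a b c d = (i = k)"
  unfolding L_R L_Q adjp_def by auto
lemma H_RX: "a < b \<Longrightarrow> c < d \<Longrightarrow> L x m a b = R k \<Longrightarrow> L x m c d = X \<Longrightarrow> adjp a b c d"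
  unfolding L_R L_X adjp_def by auto
lemma H_RCC: "a < b \<Longrightarrow> c < d \<Longrightarrow> L x m a b = R k \<Longrightarrow> L x m c d = CC \<Longrightarrow> \<not> adjp a b c d"
  unfolding L_R L_CC adjp_def by auto
lemma H_QX: "a < b \<Longrightarrow> c < d \<Longrightarrow> L x m a b = Q i \<Longrightarrow> L x m c d = X \<Longrightarrow> \<not> x + 1 < n \<Longrightarrow> b \<le> n \<Longrightarrow> d \<le> n \<Longrightarrow> adjp a b c d"
  unfolding L_Q L_X adjp_def by auto
lemma H_CCn: "L x m a b = CC \<Longrightarrow> a < b \<Longrightarrow> b \<le> n \<Longrightarrow> x + 1 < n"
  unfolding L_CC by auto
lemma H_Qi: "a < b \<Longrightarrow> L x m a b = Q i \<Longrightarrow> 1 \<le> a \<Longrightarrow> 1 \<le> i \<and> i < x"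
  unfolding L_Q by auto
lemma H_Rk: "L x m a b = R k \<Longrightarrow> a < b \<Longrightarrow> m \<le> k \<and> k < x"
  unfolding L_R by auto

lemma key_num:
  assumes "1 \<le> m" "m \<le> x" "x < n"
    "1 \<le> a1" "a1 < b1" "b1 \<le> n" "1 \<le> a2" "a2 < b2" "b2 \<le> n"
    "1 \<le> c1" "c1 < d1" "d1 \<le> n" "1 \<le> c2" "c2 < d2" "d2 \<le> n"
    and e1: "L x m a2 b2 = L x m a1 b1" and e2: "L x m c2 d2 = L x m c1 d1" and ne: "L x m c1 d1 \<noteq> L x m a1 b1"
    and ad: "adjp a1 b1 c1 d1" and nad: "\<not> adjp a2 b2 c2 d2"
  shows "L x m c1 d1 \<in> allowed n x m (L x m a1 b1)"
proof (cases "L x m a1 b1")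
  case (E i j)
  have "L x m a2 b2 = E i j" using E e1 by simp
  then have u: "a1 = i" "b1 = j" "a2 = i" "b2 = j" using E by (simp_all add: L_E)
  show ?thesis
  proof (cases "L x m c1 d1")
    case (E i' j')
    moreover have "L x m c2 d2 = E i' j'" using E e2 by simp
    ultimately have "c1 = i'" "d1 = j'" "c2 = i'" "d2 = j'" by (simp_all add: L_E)
    then show ?thesis using u ad nad by simp
  next
    case (Q k)
    then show ?thesis using H_EQ[where x=x and m=m and a=a1 and b=b1 and i=i and j=j and c=c1 and d=d1 and k=k] H_EQ[where x=x and m=m and a=a2 and b=b2 and i=i and j=j and c=c2 and d=d2 and k=k] E e1 e2 ad nad assms by simp
  next
    case (R k)
    moreover have "L x m c2 d2 = R k" using R e2 by simp
    ultimately have "c1 = k" "d1 = x" "c2 = k" "d2 = x" by (simp_all add: L_R)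
    then show ?thesis using u ad nad by simp
  next
    case X
    then show ?thesis using H_EX[where x=x and m=m and a=a1 and b=b1 and i=i and j=j and c=c1 and d=d1] E ad assms by simp
  next
    case CC
    then show ?thesis using H_ECC[where x=x and m=m and a=a1 and b=b1 and i=i and j=j and c=c1 and d=d1] E ad assms by simp
  qed
next
  case (R k)
  have "L x m a2 b2 = R k" using R e1 by simp
  then have u: "a1 = k" "b1 = x" "a2 = k" "b2 = x" using R by (simp_all add: L_R)
  show ?thesis
  proof (cases "L x m c1 d1")
    case (E i' j')
    moreover have "L x m c2 d2 = E i' j'" using E e2 by simp
    ultimately have "c1 = i'" "d1 = j'" "c2 = i'" "d2 = j'" by (simp_all add: L_E)
    then show ?thesis using u ad nad by simp
  next
    case (Q i)
    show ?thesis
    proof (cases "i < m")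
      case True
      then show ?thesis using Q R H_Qi[where x=x and m=m and a=c1 and b=d1 and i=i] assms by (simp add: allowed_def)
    next
      case False
      then show ?thesis using H_RQ[where x=x and m=m and a=a1 and b=b1 and k=k and c=c1 and d=d1 and i=i] H_RQ[where x=x and m=m and a=a2 and b=b2 and k=k and c=c2 and d=d2 and i=i] Q R e1 e2 ad nad assms by simp
    qed
  next
    case (R k')
    moreover have "L x m c2 d2 = R k'" using R e2 by simp
    ultimately have "c1 = k'" "d1 = x" "c2 = k'" "d2 = x" by (simp_all add: L_R)
    then show ?thesis using u ad nad by simp
  next
    case X
    then show ?thesis using H_RX[where x=x and m=m and a=a2 and b=b2 and k=k and c=c2 and d=d2] R e1 e2 nad assms by simp
  next
    case CC
    then show ?thesis using H_RCC[where x=x and m=m and a=a1 and b=b1 and k=k and c=c1 and d=d1] R ad assms by simp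
  qed
next
  case (Q i)
  have i: "1 \<le> i" "i < x" using H_Qi[where x=x and m=m and a=a1 and b=b1 and i=i] Q assms by auto
  show ?thesis
  proof (cases "L x m c1 d1")
    case (E i' j')
    then show ?thesis using H_EQ[where x=x and m=m and a=c1 and b=d1 and i=i' and j=j' and c=a1 and d=b1 and k=i] H_EQ[where x=x and m=m and a=c2 and b=d2 and i=i' and j=j' and c=a2 and d=b2 and k=i] Q e1 e2 ad nad assms adjp_sym[of a1 b1 c1 d1] adjp_sym[of a2 b2 c2 d2] by simp
  next
    case (Q j)
    then have "1 \<le> j" "j < x" "j \<noteq> i" using H_Qi[where x=x and m=m and a=c1 and b=d1 and i=j] \<open>L x m a1 b1 = Q i\<close> ne assms by auto
    then show ?thesis using Q \<open>L x m a1 b1 = Q i\<close> by (simp add: allowed_def)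
  next
    case (R k)
    have k: "m \<le> k" "k < x" using H_Rk[where x=x and m=m and a=c1 and b=d1 and k=k] R assms by auto
    show ?thesis
    proof (cases "i < m")
      case True
      then show ?thesis using k R Q by (simp add: allowed_def)
    next
      case False
      then show ?thesis using H_RQ[where x=x and m=m and a=c1 and b=d1 and k=k and c=a1 and d=b1 and i=i] H_RQ[where x=x and m=m and a=c2 and b=d2 and k=k and c=a2 and d=b2 and i=i] Q R e1 e2 ad nad adjp_sym[of a1 b1 c1 d1] adjp_sym[of a2 b2 c2 d2] assms by simp
    qed
  next
    case X
    show ?thesis
    proof (cases "x + 1 < n")
      case True then show ?thesis using X Q by (simp add: allowed_def)
    next
      case False
      then show ?thesis using H_QX[where x=x and m=m and a=a2 and b=b2 and i=i and c=c2 and d=d2 and n=n] X Q e1 e2 nad assms by simp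
    qed
  next
    case CC
    then have "x + 1 < n" using H_CCn[where x=x and m=m and a=c1 and b=d1 and n=n] assms by simp
    then show ?thesis using CC Q by (simp add: allowed_def)
  qed
next
  case X
  show ?thesis
  proof (cases "L x m c1 d1")
    case (E i' j')
    then show ?thesis using H_EX[where x=x and m=m and a=c1 and b=d1 and i=i' and j=j' and c=a1 and d=b1] X ad adjp_sym[of a1 b1 c1 d1] assms by simp
  next
    case (Q j)
    then have "1 \<le> j" "j < x" using H_Qi[where x=x and m=m and a=c1 and b=d1 and i=j] assms by auto
    then show ?thesis using Q X by (simp add: allowed_def)
  next
    case (R k)
    then show ?thesis using H_RX[where x=x and m=m and a=c2 and b=d2 and k=k and c=a2 and d=b2] X R e1 e2 nad adjp_sym[of a2 b2 c2 d2] assms by simp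
  next
    case X
    then show ?thesis using ne \<open>L x m a1 b1 = X\<close> by simp
  next
    case CC
    then show ?thesis using X by (simp add: allowed_def)
  qed
next
  case CC
  show ?thesis
  proof (cases "L x m c1 d1")
    case (E i' j')
    then show ?thesis using H_ECC[where x=x and m=m and a=c1 and b=d1 and i=i' and j=j' and c=a1 and d=b1] CC ad adjp_sym[of a1 b1 c1 d1] assms by simp
  next
    case (Q j)
    then have "1 \<le> j" "j < x" using H_Qi[where x=x and m=m and a=c1 and b=d1 and i=j] assms by auto
    then show ?thesis using Q CC by (simp add: allowed_def)
  next
    case (R k)
    then show ?thesis using H_RCC[where x=x and m=m and a=c1 and b=d1 and k=k and c=a1 and d=b1] CC ad adjp_sym[of a1 b1 c1 d1] assms by simp
  next
    case X
    then show ?thesis using CC by (simp add: allowed_def)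
  next
    case CC
    then show ?thesis using ne \<open>L x m a1 b1 = CC\<close> by simp
  qed
qed


lemma jV: "v \<in> johnson_V n \<longleftrightarrow> (\<exists>a b. v = {a, b} \<and> 1 \<le> a \<and> a < b \<and> b \<le> n)"
proof
  assume "v \<in> johnson_V n"
  then have s: "v \<subseteq> {1..n}" and c: "card v = 2" unfolding johnson_V_def by auto
  from c obtain x y where xy: "v = {x, y}" "x \<noteq> y" unfolding card_2_iff by blast
  have xs: "1 \<le> x" "x \<le> n" "1 \<le> y" "y \<le> n" using s xy(1) by auto
  show "\<exists>a b. v = {a, b} \<and> 1 \<le> a \<and> a < b \<and> b \<le> n"
  proof (cases "x < y")
    case True then show ?thesis using xy xs by blast
  next
    case False 
    then have "y < x" using xy(2) by simp
    moreover have "v = {y, x}" using xy(1) by blast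
    ultimately show ?thesis using xs by blast
  qed
next
  assume "\<exists>a b. v = {a, b} \<and> 1 \<le> a \<and> a < b \<and> b \<le> n"
  then obtain a b where "v = {a, b}" "1 \<le> a" "a < b" "b \<le> n" by blast
  then show "v \<in> johnson_V n" unfolding johnson_V_def by auto
qed

lemma jE: "{u, w} \<in> johnson_E n \<longleftrightarrow> u \<in> johnson_V n \<and> w \<in> johnson_V n \<and> card (u \<inter> w) = 1"
proof
  assume "{u, w} \<in> johnson_E n"
  then obtain S S' where "{u, w} = {S, S'}" "S \<in> johnson_V n" "S' \<in> johnson_V n" "card (S \<inter> S') = 1"
    unfolding johnson_E_def by blast
  then show "u \<in> johnson_V n \<and> w \<in> johnson_V n \<and> card (u \<inter> w) = 1"
    unfolding doubleton_eq_iff by (auto simp: Int_commute)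
next
  assume "u \<in> johnson_V n \<and> w \<in> johnson_V n \<and> card (u \<inter> w) = 1"
  then show "{u, w} \<in> johnson_E n" unfolding johnson_E_def by blast
qed

lemma card_int_adjp: "a < b \<Longrightarrow> c < d \<Longrightarrow> card ({a, b} \<inter> {c, d}) = 1 \<longleftrightarrow> adjp a b c d"
  unfolding adjp_def
  by (cases "a = c"; cases "a = d"; cases "b = c"; cases "b = d") (auto simp: Int_insert_left Int_insert_right)

lemma Min2: "a < (b::nat) \<Longrightarrow> Min {a, b} = a" by simp
lemma Max2: "a < (b::nat) \<Longrightarrow> Max {a, b} = b" by simp

lemma finite_jV: "finite (johnson_V n)"
  unfolding johnson_V_def by (rule finite_subset[of _ "Pow {1..n}"]) auto

lemma card_jV: "card (johnson_V n) = n choose 2"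
  unfolding johnson_V_def using n_subsets[of "{1..n}" 2] by simp

definition lab :: "nat \<Rightarrow> nat \<Rightarrow> nat set \<Rightarrow> lbl" where
  "lab x m v = L x m (Min v) (Max v)"

lemma lab2: "a < b \<Longrightarrow> lab x m {a, b} = L x m a b"
  unfolding lab_def by simp

lemma allowed_card:
  assumes n: "5 \<le> n" and "1 \<le> m" "m \<le> x" "x < n" "1 \<le> a" "a < b" "b \<le> n"
  shows "card (allowed n x m (L x m a b)) \<le> 2 * (n - 3)"
proof (cases "L x m a b")
  case (E i j)
  then show ?thesis by (simp add: allowed_def)
next
  case (R k)
  have "card (Q ` {1..<m}) \<le> card {1..<m}" by (rule card_image_le) simp
  then show ?thesis using R assms by (simp add: allowed_def)
next
  case (Q i)
  have i: "1 \<le> i" "i < x" using H_Qi[where x=x and m=m and a=a and b=b and i=i] Q assms by auto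
  let ?A = "(if i < m then R ` {m..<x} else {})" and ?B = "Q ` ({1..<x} - {i})"
    and ?C = "(if x + 1 < n then {X, CC} else {})"
  have cA: "card ?A \<le> (if i < m then x - m else 0)"
    using card_image_le[of "{m..<x}" R] by simp
  have "card ?B \<le> card ({1..<x} - {i})" by (rule card_image_le) simp
  also have "\<dots> = x - 2" using i by simp
  finally have cB: "card ?B \<le> x - 2" .
  have cC: "card ?C \<le> (if x + 1 < n then 2 else 0)" by (simp add: card_insert_if)
  have "card (allowed n x m (L x m a b)) = card (?A \<union> ?B \<union> ?C)" using Q by (simp add: allowed_def)
  also have "\<dots> \<le> card ?A + card ?B + card ?C"
    by (meson add_le_mono card_Un_le le_trans order_refl)
  also have "\<dots> \<le> (if i < m then x - m else 0) + (x - 2) + (if x + 1 < n then 2 else 0)"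
    using cA cB cC by linarith
  also have "\<dots> \<le> 2 * (n - 3)" using i assms by auto
  finally show ?thesis .
next
  case X
  have "card (insert CC (Q ` {1..<x})) \<le> Suc (card (Q ` {1..<x}))" by (simp add: card_insert_le_m1 card_insert_if)
  moreover have "card (Q ` {1..<x}) \<le> card {1..<x}" by (rule card_image_le) simp
  ultimately show ?thesis using X assms by (simp add: allowed_def)
next
  case CC
  have "card (insert X (Q ` {1..<x})) \<le> Suc (card (Q ` {1..<x}))" by (simp add: card_insert_if)
  moreover have "card (Q ` {1..<x}) \<le> card {1..<x}" by (rule card_image_le) simp
  ultimately show ?thesis using CC assms by (simp add: allowed_def)
qed

lemma finite_allowed: "finite (allowed n x m l)"
  unfolding allowed_def by (cases l) auto

lemma johnson_red:
  assumes n: "5 \<le> n" and m: "1 \<le> m" "m \<le> x" "x < n"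
    and U: "U \<in> part (johnson_V n) (lab x m)"
  shows "quot_red_deg (johnson_E n) {} (part (johnson_V n) (lab x m)) U \<le> 2 * (n - 3)"
proof -
  obtain u where u: "u \<in> johnson_V n" "U = cls (johnson_V n) (lab x m) u" using U unfolding part_def by auto
  obtain a b where ab: "u = {a, b}" "1 \<le> a" "a < b" "b \<le> n" using u(1) jV by blast
  have "quot_red_deg (johnson_E n) {} (part (johnson_V n) (lab x m)) U \<le> card (allowed n x m (lab x m u))"
    unfolding u(2)
  proof (rule red_deg_bound[OF finite_allowed u(1)])
    fix u1 u2 w1 w2
    assume h: "u1 \<in> johnson_V n" "u2 \<in> johnson_V n" "w1 \<in> johnson_V n" "w2 \<in> johnson_V n"
      "lab x m u1 = lab x m u" "lab x m u2 = lab x m u" "lab x m w1 = lab x m w2" "lab x m w1 \<noteq> lab x m u"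
      "{u1, w1} \<in> johnson_E n" "{u2, w2} \<notin> johnson_E n"
    obtain a1 b1 where 1: "u1 = {a1, b1}" "1 \<le> a1" "a1 < b1" "b1 \<le> n" using h(1) jV by blast
    obtain a2 b2 where 2: "u2 = {a2, b2}" "1 \<le> a2" "a2 < b2" "b2 \<le> n" using h(2) jV by blast
    obtain c1 d1 where 3: "w1 = {c1, d1}" "1 \<le> c1" "c1 < d1" "d1 \<le> n" using h(3) jV by blast
    obtain c2 d2 where 4: "w2 = {c2, d2}" "1 \<le> c2" "c2 < d2" "d2 \<le> n" using h(4) jV by blast
    have "card ({a1, b1} \<inter> {c1, d1}) = 1" using h(9) unfolding 1 3 jE by blast
    then have ad: "adjp a1 b1 c1 d1" using card_int_adjp[OF 1(3) 3(3)] by blast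
    have "card ({a2, b2} \<inter> {c2, d2}) \<noteq> 1" using h(10) h(2) h(4) unfolding 2 4 jE by blast
    then have nad: "\<not> adjp a2 b2 c2 d2" using card_int_adjp[OF 2(3) 4(3)] by blast
    have "L x m c1 d1 \<in> allowed n x m (L x m a1 b1)"
      apply (rule key_num[of m x n a1 b1 a2 b2 c1 d1 c2 d2])
      using m 1 2 3 4 h(5-8) ad nad by (simp_all add: lab2)
    then show "lab x m w1 \<in> allowed n x m (lab x m u)"
      using 1 3 h(5) by (simp add: lab2)
  qed
  also have "\<dots> \<le> 2 * (n - 3)" using allowed_card[OF n m ab(2-4)] ab by (simp add: lab2)
  finally show ?thesis .
qed


lemma part_merge_h:
  assumes a: "a \<in> V" and b: "b \<in> V" and ab: "f a \<noteq> f b"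
    and g: "\<And>u. u \<in> V \<Longrightarrow> g u = h (f u)"
    and h: "\<And>p q. h p = h q \<longleftrightarrow> p = q \<or> (p = f a \<and> q = f b) \<or> (p = f b \<and> q = f a)"
  shows "merge_step (part V f) (part V g)"
  by (rule part_merge[OF a b ab]) (simp add: g h)

definition PP :: "nat \<Rightarrow> nat \<Rightarrow> nat \<Rightarrow> nat set set set" where
  "PP n x m = part (johnson_V n) (lab x m)"

lemma lab_v: "v \<in> johnson_V n \<Longrightarrow> \<exists>a b. v = {a, b} \<and> 1 \<le> a \<and> a < b \<and> b \<le> n \<and> (\<forall>x m. lab x m v = L x m a b)"
  using jV[of v n] lab2 by blast

lemma pair_in: "1 \<le> a \<Longrightarrow> a < b \<Longrightarrow> b \<le> n \<Longrightarrow> {a, b} \<in> johnson_V n"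
  using jV by blast

lemma L_M1: "L x (Suc m) a b = (if L x m a b = R m then Q m else L x m a b)"
  unfolding L_def by auto

lemma merge_M1:
  assumes "1 \<le> m" "m < x" "x < n"
  shows "merge_step (PP n x m) (PP n x (Suc m))"
  unfolding PP_def
proof (rule part_merge_h[where a="{m, x}" and b="{m, n}" and h="\<lambda>p. if p = R m then Q m else p"])
  show "{m, x} \<in> johnson_V n" "{m, n} \<in> johnson_V n" using assms by (auto intro: pair_in)
  have "lab x m {m, x} = R m" "lab x m {m, n} = Q m" using assms by (simp_all add: lab2 L_def)
  then show "lab x m {m, x} \<noteq> lab x m {m, n}"
    "\<And>p q. ((if p = R m then Q m else p) = (if q = R m then Q m else q)) \<longleftrightarrow>
       p = q \<or> (p = lab x m {m, x} \<and> q = lab x m {m, n}) \<or> (p = lab x m {m, n} \<and> q = lab x m {m, x})"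
    by auto
  fix u assume "u \<in> johnson_V n"
  then obtain a b where "u = {a, b}" "a < b" using jV by blast
  then show "lab x (Suc m) u = (if lab x m u = R m then Q m else lab x m u)"
    by (simp add: lab2 L_M1)
qed

fun h2 :: "nat \<Rightarrow> lbl \<Rightarrow> lbl" where
  "h2 x (E a b) = (if b = x then R a else E a b)"
| "h2 x (R a) = E a x"
| "h2 x (Q a) = (if a = x then X else Q a)"
| "h2 x X = CC"
| "h2 x CC = CC"

lemma h2_iff: "h2 x p = h2 x q \<longleftrightarrow> p = q \<or> (p = X \<and> q = CC) \<or> (p = CC \<and> q = X)"
  by (cases p; cases q) auto

lemma L_M2: "1 \<le> a \<Longrightarrow> a < b \<Longrightarrow> L x 1 a b = h2 x (L (Suc x) (Suc x) a b)"
  unfolding L_def by auto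

lemma merge_M2:
  assumes "1 \<le> x" "x + 3 \<le> n"
  shows "merge_step (PP n (Suc x) (Suc x)) (PP n x 1)"
  unfolding PP_def
proof (rule part_merge_h[where a="{Suc x, n}" and b="{x + 2, x + 3}" and h="h2 x"])
  show "{Suc x, n} \<in> johnson_V n" "{x + 2, x + 3} \<in> johnson_V n" using assms by (auto intro: pair_in)
  have "lab (Suc x) (Suc x) {Suc x, n} = X" "lab (Suc x) (Suc x) {x + 2, x + 3} = CC" using assms by (simp_all add: lab2 L_def)
  then show "lab (Suc x) (Suc x) {Suc x, n} \<noteq> lab (Suc x) (Suc x) {x + 2, x + 3}"
    "\<And>p q. (h2 x p = h2 x q) \<longleftrightarrow>
       p = q \<or> (p = lab (Suc x) (Suc x) {Suc x, n} \<and> q = lab (Suc x) (Suc x) {x + 2, x + 3}) \<or> (p = lab (Suc x) (Suc x) {x + 2, x + 3} \<and> q = lab (Suc x) (Suc x) {Suc x, n})"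
    by (auto simp: h2_iff)
  fix u assume "u \<in> johnson_V n"
  then obtain a b where "u = {a, b}" "1 \<le> a" "a < b" using jV by blast
  then show "lab x 1 u = h2 x (lab (Suc x) (Suc x) u)"
    using L_M2[of a b x] by (simp add: lab2)
qed

fun h3 :: "nat \<Rightarrow> lbl \<Rightarrow> lbl" where
  "h3 y (E a b) = (if b = y then R a else E a b)"
| "h3 y (R a) = (if a = y then X else E a y)"
| "h3 y (Q a) = (if a = y then X else Q a)"
| "h3 y X = CC"
| "h3 y CC = E y y"

lemma h3_iff: "h3 y p = h3 y q \<longleftrightarrow> p = q \<or> (p = R y \<and> q = Q y) \<or> (p = Q y \<and> q = R y)"
  by (cases p; cases q) auto

lemma L_M3: "1 \<le> a \<Longrightarrow> a < b \<Longrightarrow> b \<le> y + 2 \<Longrightarrow> L y 1 a b = h3 y (L (Suc y) y a b)"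
  unfolding L_def by auto

lemma merge_M3:
  assumes "1 \<le> y" "n = y + 2"
  shows "merge_step (PP n (Suc y) y) (PP n y 1)"
  unfolding PP_def
proof (rule part_merge_h[where a="{y, Suc y}" and b="{y, n}" and h="h3 y"])
  show "{y, Suc y} \<in> johnson_V n" "{y, n} \<in> johnson_V n" using assms by (auto intro: pair_in)
  have "lab (Suc y) y {y, Suc y} = R y" "lab (Suc y) y {y, n} = Q y" using assms by (simp_all add: lab2 L_def)
  then show "lab (Suc y) y {y, Suc y} \<noteq> lab (Suc y) y {y, n}"
    "\<And>p q. (h3 y p = h3 y q) \<longleftrightarrow>
       p = q \<or> (p = lab (Suc y) y {y, Suc y} \<and> q = lab (Suc y) y {y, n}) \<or> (p = lab (Suc y) y {y, n} \<and> q = lab (Suc y) y {y, Suc y})"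
    by (auto simp: h3_iff)
  fix u assume "u \<in> johnson_V n"
  then obtain a b where "u = {a, b}" "1 \<le> a" "a < b" "b \<le> n" using jV by blast
  then show "lab y 1 u = h3 y (lab (Suc y) y u)"
    using assms L_M3[of a b y] by (simp add: lab2)
qed

lemma merge_M0:
  assumes "3 \<le> n"
  shows "merge_step (PP n 1 1) {johnson_V n}"
proof -
  have ne: "johnson_V n \<noteq> {}" using pair_in[of 1 2 n] assms by auto
  have "part (johnson_V n) (\<lambda>_. ()) = {johnson_V n}" by (rule part_const[OF ne]) simp
  moreover have "merge_step (part (johnson_V n) (lab 1 1)) (part (johnson_V n) (\<lambda>_. ()))"
  proof (rule part_merge[where a="{1, 2}" and b="{2, 3}"])
    show "{1, 2} \<in> johnson_V n" "{2, 3} \<in> johnson_V n" using assms by (auto intro: pair_in)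
    have X: "lab 1 1 {1, 2} = X" and C: "lab 1 1 {2, 3} = CC" by (simp_all add: lab2 L_def)
    then show "lab 1 1 {1, 2} \<noteq> lab 1 1 {2, 3}" by simp
    have XC: "lab 1 1 u = X \<or> lab 1 1 u = CC" if "u \<in> johnson_V n" for u
    proof -
      obtain a b where "u = {a, b}" "1 \<le> a" "a < b" using jV \<open>u \<in> johnson_V n\<close> by blast
      then show ?thesis by (simp add: lab2 L_def)
    qed
    fix u v assume u: "u \<in> johnson_V n" and v: "v \<in> johnson_V n"
    show "(() = ()) = (lab 1 1 u = lab 1 1 v \<or>
          lab 1 1 u = lab 1 1 {1, 2} \<and> lab 1 1 v = lab 1 1 {2, 3} \<or>
          lab 1 1 u = lab 1 1 {2, 3} \<and> lab 1 1 v = lab 1 1 {1, 2})"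
      using XC[OF u] XC[OF v] unfolding X C by auto
  qed
  ultimately show ?thesis unfolding PP_def by simp
qed

lemma L_inj_first:
  assumes "1 \<le> a" "a < b" "b \<le> n" "1 \<le> c" "c < d" "d \<le> n" "L (n - 1) 1 a b = L (n - 1) 1 c d"
  shows "a = c \<and> b = d"
  using assms unfolding L_def by (auto split: if_splits)

lemma PP_first:
  assumes "2 \<le> n"
  shows "PP n (n - 1) 1 = singleton_partition (johnson_V n)"
  unfolding PP_def
proof (rule part_inj)
  show "inj_on (lab (n - 1) 1) (johnson_V n)"
  proof (rule inj_onI)
    fix u v assume u: "u \<in> johnson_V n" and v: "v \<in> johnson_V n" and e: "lab (n - 1) 1 u = lab (n - 1) 1 v"
    obtain a b where 1: "u = {a, b}" "1 \<le> a" "a < b" "b \<le> n" using jV u by blast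
    obtain c d where 2: "v = {c, d}" "1 \<le> c" "c < d" "d \<le> n" using jV v by blast
    have "a = c \<and> b = d" by (rule L_inj_first) (use 1 2 e in \<open>simp_all add: lab2\<close>)
    then show "u = v" using 1 2 by simp
  qed
qed


lemma succ_upt:
  assumes "\<And>i. a \<le> i \<Longrightarrow> Suc i < b \<Longrightarrow> P (F i) (F (Suc i))"
  shows "successively P (map F [a..<b])"
  using assms
proof (induction b)
  case 0 then show ?case by simp
next
  case (Suc b)
  show ?case
  proof (cases "a < b")
    case False
    then have "[a..<Suc b] = [] \<or> [a..<Suc b] = [a]" by (cases "a = b") auto
    then show ?thesis by auto
  next
    case True
    have IH: "successively P (map F [a..<b])" using Suc by simp
    have eq: "[a..<Suc b] = [a..<b] @ [b]" using True by simp
    have last: "last (map F [a..<b]) = F (b - 1)" using True by (simp add: last_map)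
    have "P (F (b - 1)) (F (Suc (b - 1)))" using Suc.prems[of "b - 1"] True by simp
    then have "P (last (map F [a..<b])) (F b)" using last True by simp
    then show ?thesis unfolding eq using IH True by (simp add: successively_append_iff)
  qed
qed

lemma successively_nth: "successively P xs \<Longrightarrow> Suc i < length xs \<Longrightarrow> P (xs ! i) (xs ! Suc i)"
proof (induction xs arbitrary: i)
  case Nil then show ?case by simp
next
  case (Cons x xs)
  then obtain y ys where xs: "xs = y # ys" by (cases xs) auto
  have s: "P x y" "successively P xs" using Cons.prems(1) xs by simp_all
  show ?case
  proof (cases i)
    case 0 then show ?thesis using s xs by simp
  next
    case (Suc j)
    then show ?thesis using Cons.IH[OF s(2), of j] Cons.prems(2) by simp
  qed
qed

primrec blocks :: "nat \<Rightarrow> nat \<Rightarrow> nat set set set list" where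
  "blocks n 0 = []"
| "blocks n (Suc x) = map (PP n (Suc x)) [1..<Suc x + 1] @ blocks n x"

lemma blocks_props:
  "1 \<le> k \<Longrightarrow> k + 2 \<le> n \<Longrightarrow> successively merge_step (blocks n k @ [{johnson_V n}]) \<and> blocks n k \<noteq> [] \<and> hd (blocks n k) = PP n k 1"
proof (induction k)
  case 0 then show ?case by simp
next
  case (Suc k)
  show ?case
  proof (cases "k = 0")
    case True
    then show ?thesis using merge_M0[of n] Suc.prems by simp
  next
    case False
    then have IH: "successively merge_step (blocks n k @ [{johnson_V n}])" "blocks n k \<noteq> []" "hd (blocks n k) = PP n k 1"
      using Suc by auto
    let ?A = "map (PP n (Suc k)) [1..<Suc k + 1]"
    have A: "successively merge_step ?A"
      by (rule succ_upt) (rule merge_M1, use Suc.prems in auto)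
    have lA: "last ?A = PP n (Suc k) (Suc k)" by (simp add: last_map)
    have tr: "merge_step (PP n (Suc k) (Suc k)) (PP n k 1)" by (rule merge_M2) (use False Suc.prems in auto)
    have "successively merge_step (?A @ (blocks n k @ [{johnson_V n}]))"
      unfolding successively_append_iff[of _ ?A] using A IH lA tr by simp
    then have S: "successively merge_step (blocks n (Suc k) @ [{johnson_V n}])" by simp
    have H: "hd (blocks n (Suc k)) = PP n (Suc k) 1" by (simp add: upt_rec)
    have NE: "blocks n (Suc k) \<noteq> []" by simp
    show ?thesis using S H NE by blast
  qed
qed

lemma blocks_set: "P \<in> set (blocks n k) \<Longrightarrow> \<exists>x m. P = PP n x m \<and> 1 \<le> m \<and> m \<le> x \<and> x \<le> k"
proof (induction k)
  case 0 then show ?case by simp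
next
  case (Suc k)
  show ?case
  proof (cases "P \<in> set (blocks n k)")
    case True
    then obtain x m where "P = PP n x m" "1 \<le> m" "m \<le> x" "x \<le> k" using Suc.IH by blast
    then show ?thesis by (intro exI[of _ x] exI[of _ m]) simp
  next
    case False
    then obtain m where "P = PP n (Suc k) m" "1 \<le> m" "m < Suc k + 1" using Suc.prems by auto
    then show ?thesis by (intro exI[of _ "Suc k"] exI[of _ m]) simp
  qed
qed

lemma blocks_len: "2 * length (blocks n k) = k * (k + 1)"
  by (induction k) (auto simp: algebra_simps)

definition pss :: "nat \<Rightarrow> nat set set set list" where
  "pss n = map (PP n (n - 1)) [1..<n - 1] @ blocks n (n - 2) @ [{johnson_V n}]"

lemma pss_valid:
  assumes n: "3 \<le> n"
  shows "contraction_seq (johnson_V n) (pss n)"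
proof -
  obtain k where k: "n = k + 3" using n by (metis add.commute le_Suc_ex)
  have len: "length (pss n) = card (johnson_V n)"
  proof -
    have "2 * length (pss n) = 2 * (n - 2) + 2 * length (blocks n (n - 2)) + 2"
      unfolding pss_def by simp
    also have "\<dots> = 2 * (k + 1) + (k + 1) * (k + 2) + 2" unfolding blocks_len k by simp
    also have "\<dots> = (k + 3) * (k + 2)" by (simp add: algebra_simps)
    finally have "2 * length (pss n) = n * (n - 1)" using k by simp
    then show ?thesis unfolding card_jV choose_two by simp
  qed
  have ne: "johnson_V n \<noteq> {}" using pair_in[of 1 2 n] n by auto
  have parts: "\<forall>P\<in>set (pss n). partition_on (johnson_V n) P"
  proof
    fix P assume "P \<in> set (pss n)"
    then consider (a) m where "P = PP n (n - 1) m" | (b) x m where "P = PP n x m" | (c) "P = {johnson_V n}"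
      unfolding pss_def using blocks_set[of P n "n - 2"] by auto
    then show "partition_on (johnson_V n) P"
      by cases (auto simp: PP_def part_partition partition_on_space[OF ne])
  qed
  have first: "pss n ! 0 = singleton_partition (johnson_V n)"
    using PP_first[of n] n unfolding pss_def by (simp add: nth_append)
  have B: "successively merge_step (blocks n (n - 2) @ [{johnson_V n}])" "hd (blocks n (n - 2) @ [{johnson_V n}]) = PP n (n - 2) 1"
    using blocks_props[of "n - 2" n] n by auto
  let ?A = "map (PP n (n - 1)) [1..<n - 1]"
  have A: "successively merge_step ?A"
    by (rule succ_upt) (rule merge_M1, use n in auto)
  have lA: "last ?A = PP n (n - 1) (n - 2)" using k by (simp add: last_map)
  have tr: "merge_step (PP n (Suc (k + 1)) (k + 1)) (PP n (k + 1) 1)" by (rule merge_M3) (use k in auto)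
  have e1: "n - 1 = Suc (k + 1)" and e2: "n - 2 = k + 1" using k by simp_all
  have tr': "merge_step (PP n (n - 1) (n - 2)) (PP n (n - 2) 1)" unfolding e1 e2 by (rule tr)
  have S: "successively merge_step (pss n)"
    unfolding pss_def successively_append_iff[of _ ?A] using A B lA tr' n by auto
  show ?thesis unfolding contraction_seq_def
    using len parts first successively_nth[OF S] by auto
qed

lemma pss_width:
  assumes n: "5 \<le> n"
  shows "seq_width (johnson_E n) {} (pss n) \<le> 2 * (n - 3)"
proof -
  have "max_red_deg (johnson_E n) {} P \<le> 2 * (n - 3)" if P: "P \<in> set (pss n)" for P
  proof -
    consider (a) x m where "P = PP n x m" "1 \<le> m" "m \<le> x" "x < n" | (c) "P = {johnson_V n}"
      using P n unfolding pss_def using blocks_set[of P n "n - 2"] by fastforce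
    then show ?thesis
    proof cases
      case a
      show ?thesis unfolding a(1) PP_def
        by (rule max_red_deg_le[OF finite_part[OF finite_jV]], rule johnson_red) (use a n in auto)
    next
      case c then show ?thesis by (simp add: max_red_deg_single)
    qed
  qed
  then show ?thesis unfolding seq_width_def by (simp add: Max_le_iff)
qed

lemma tww_le:
  assumes "contraction_seq V ps"
  shows "tww V BB RR \<le> seq_width BB RR ps"
  unfolding tww_def by (rule Least_le) (use assms in blast)


lemma first_merge:
  assumes cs: "contraction_seq V ps" and c: "2 \<le> card V"
  shows "\<exists>u v. u \<in> V \<and> v \<in> V \<and> u \<noteq> v \<and> ps ! 1 = pair_partition V u v"
proof -
  have "Suc 0 < length ps" using cs c unfolding contraction_seq_def by simp
  then have "merge_step (ps ! 0) (ps ! Suc 0)" using cs unfolding contraction_seq_def by blast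
  then obtain U W where UW: "U \<in> singleton_partition V" "W \<in> singleton_partition V" "U \<noteq> W"
    "ps ! 1 = insert (U \<union> W) (singleton_partition V - {U, W})"
    using cs unfolding contraction_seq_def merge_step_def by auto
  then obtain u w where uw: "u \<in> V" "w \<in> V" "U = {u}" "W = {w}" unfolding singleton_partition_def by auto
  have "u \<noteq> w" using uw UW by auto
  moreover have "singleton_partition V - {{u}, {w}} = (\<lambda>x. {x}) ` (V - {u, w})"
    unfolding singleton_partition_def by auto
  ultimately show ?thesis using UW uw unfolding pair_partition_def
    by (intro exI[of _ u] exI[of _ w]) (simp add: insert_commute)
qed

lemma finite_lb1_set:
  assumes "finite V"
  shows "finite {max_red_deg BB RR (pair_partition V u v) | u v. u \<in> V \<and> v \<in> V \<and> u \<noteq> v}"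
proof -
  have "{max_red_deg BB RR (pair_partition V u v) | u v. u \<in> V \<and> v \<in> V \<and> u \<noteq> v}
      \<subseteq> (\<lambda>(u, v). max_red_deg BB RR (pair_partition V u v)) ` (V \<times> V)" by auto
  then show ?thesis by (rule finite_subset) (use assms in simp)
qed

lemma lb1_le_width:
  assumes fin: "finite V" and c: "2 \<le> card V" and cs: "contraction_seq V ps"
  shows "lb1 V BB RR \<le> seq_width BB RR ps"
proof -
  obtain u v where uv: "u \<in> V" "v \<in> V" "u \<noteq> v" "ps ! 1 = pair_partition V u v"
    using first_merge[OF cs c] by blast
  have "lb1 V BB RR = Min {max_red_deg BB RR (pair_partition V u v) | u v. u \<in> V \<and> v \<in> V \<and> u \<noteq> v}"
    using c unfolding lb1_def by simp
  also have "\<dots> \<le> max_red_deg BB RR (pair_partition V u v)"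
    by (rule Min_le[OF finite_lb1_set[OF fin]]) (use uv in blast)
  also have "\<dots> = max_red_deg BB RR (ps ! 1)" using uv by simp
  also have "\<dots> \<le> seq_width BB RR ps"
  proof -
    have "1 < length ps" using cs c unfolding contraction_seq_def by simp
    then have "ps ! 1 \<in> set ps" by simp
    then show ?thesis unfolding seq_width_def by (intro Max_ge) auto
  qed
  finally show ?thesis .
qed

lemma lb1_le_tww:
  assumes fin: "finite V" and c: "2 \<le> card V" and ex: "contraction_seq V ps0"
  shows "lb1 V BB RR \<le> tww V BB RR"
proof -
  have "\<exists>w. \<exists>ps. contraction_seq V ps \<and> seq_width BB RR ps = w" using ex by blast
  then have "\<exists>ps. contraction_seq V ps \<and> seq_width BB RR ps = tww V BB RR"
    unfolding tww_def by (rule LeastI_ex)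
  then obtain ps where "contraction_seq V ps" "seq_width BB RR ps = tww V BB RR" by blast
  then show ?thesis using lb1_le_width[OF fin c] by metis
qed

lemma red_pair_lb:
  assumes n: "5 \<le> n" and u: "u \<in> johnson_V n" and v: "v \<in> johnson_V n" and uv: "u \<noteq> v"
  shows "2 * (n - 3) \<le> quot_red_deg (johnson_E n) {} (pair_partition (johnson_V n) u v) {u, v}"
proof -
  let ?V = "johnson_V n" and ?P = "pair_partition (johnson_V n) u v"
  let ?Qs = "(u - v) \<union> (v - u)" and ?Ys = "{1..n} - (u \<union> v)"
  let ?F = "\<lambda>(p, t). {p, t}"
  have uS: "u \<subseteq> {1..n}" "card u = 2" and vS: "v \<subseteq> {1..n}" "card v = 2"
    using u v unfolding johnson_V_def by auto
  have finu: "finite u" "finite v" using uS vS by (auto intro: finite_subset)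
  have QY: "?Qs \<inter> ?Ys = {}" by auto
  have sub: "(\<lambda>w. {w}) ` (?F ` (?Qs \<times> ?Ys)) \<subseteq> {W. quot_red_adj (johnson_E n) {} ?P {u, v} W}"
  proof
    fix Z assume "Z \<in> (\<lambda>w. {w}) ` (?F ` (?Qs \<times> ?Ys))"
    then obtain x where x: "x \<in> ?Qs \<times> ?Ys" "Z = {?F x}" by blast
    obtain p t where "x = (p, t)" by (cases x)
    then have pt: "p \<in> ?Qs" "t \<in> ?Ys" "Z = {{p, t}}" using x by auto
    let ?w = "{p, t}"
    have pt_ne: "p \<noteq> t" using pt by auto
    have wV: "?w \<in> ?V" using pt uS vS pt_ne unfolding johnson_V_def by auto
    have wnot: "?w \<noteq> u" "?w \<noteq> v" using pt by auto
    have ZP: "Z \<in> ?P" using wV wnot pt(3) unfolding pair_partition_def by auto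
    have UP: "{u, v} \<in> ?P" unfolding pair_partition_def by simp
    have ZU: "{u, v} \<noteq> Z" using uv pt(3) by (auto simp: doubleton_eq_iff)
    have mixed: "({u, ?w} \<in> johnson_E n \<and> {v, ?w} \<notin> johnson_E n) \<or> ({v, ?w} \<in> johnson_E n \<and> {u, ?w} \<notin> johnson_E n)"
    proof (cases "p \<in> u - v")
      case True
      then have "u \<inter> ?w = {p}" "v \<inter> ?w = {}" using pt by auto
      then show ?thesis using u v wV by (simp add: jE)
    next
      case False
      then have "p \<in> v - u" using pt by auto
      then have "v \<inter> ?w = {p}" "u \<inter> ?w = {}" using pt by auto
      then show ?thesis using u v wV by (simp add: jE)
    qed
    show "Z \<in> {W. quot_red_adj (johnson_E n) {} ?P {u, v} W}"
      using mixed ZP UP ZU pt(3) unfolding quot_red_adj_def by auto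
  qed
  have finW: "finite {W. quot_red_adj (johnson_E n) {} ?P {u, v} W}"
  proof (rule finite_subset)
    show "{W. quot_red_adj (johnson_E n) {} ?P {u, v} W} \<subseteq> ?P" unfolding quot_red_adj_def by auto
    show "finite ?P" unfolding pair_partition_def using finite_jV by simp
  qed
  have injF: "inj_on ?F (?Qs \<times> ?Ys)"
  proof (rule inj_onI)
    fix x y assume x: "x \<in> ?Qs \<times> ?Ys" and y: "y \<in> ?Qs \<times> ?Ys" and e: "?F x = ?F y"
    obtain p t where "x = (p, t)" by (cases x)
    moreover obtain p' t' where "y = (p', t')" by (cases y)
    ultimately show "x = y" using x y e QY by (auto simp: doubleton_eq_iff)
  qed
  have finQY: "finite (?Qs \<times> ?Ys)" using finu by simp
  have "card (?Qs \<times> ?Ys) = card (?F ` (?Qs \<times> ?Ys))" using card_image[OF injF] by simp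
  also have "\<dots> = card ((\<lambda>w. {w}) ` (?F ` (?Qs \<times> ?Ys)))"
    by (rule card_image[symmetric]) (simp add: inj_on_def)
  also have "\<dots> \<le> card {W. quot_red_adj (johnson_E n) {} ?P {u, v} W}"
    by (rule card_mono[OF finW sub])
  finally have main: "card ?Qs * card ?Ys \<le> quot_red_deg (johnson_E n) {} ?P {u, v}"
    unfolding quot_red_deg_def by (simp add: card_cartesian_product)
  define k where "k = card (u \<inter> v)"
  have k1: "k \<le> 1"
  proof (rule ccontr)
    assume "\<not> k \<le> 1"
    then have "card (u \<inter> v) \<ge> 2" unfolding k_def by simp
    moreover have "card (u \<inter> v) \<le> card u" by (rule card_mono) (use finu in auto)
    ultimately have "card (u \<inter> v) = card u" "card (u \<inter> v) = card v" using uS vS by auto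
    then have "u \<inter> v = u" "u \<inter> v = v" using card_subset_eq[of u "u \<inter> v"] card_subset_eq[of v "u \<inter> v"] finu by auto
    then show False using uv by simp
  qed
  have c1: "card (u - v) = 2 - k" using card_Diff_subset_Int[of u v] finu uS unfolding k_def by simp
  have c2: "card (v - u) = 2 - k" using card_Diff_subset_Int[of v u] finu vS unfolding k_def by (simp add: Int_commute)
  have "card ?Qs = card (u - v) + card (v - u)" by (rule card_Un_disjoint) (use finu in auto)
  then have cQ: "card ?Qs = 4 - 2 * k" using c1 c2 k1 by simp
  have cU: "card (u \<union> v) = 4 - k" using card_Un_Int[of u v] finu uS vS k1 unfolding k_def by simp
  have cY: "card ?Ys = n - (4 - k)" using card_Diff_subset[of "u \<union> v" "{1..n}"] finu uS vS cU by simp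
  have "2 * (n - 3) \<le> card ?Qs * card ?Ys"
  proof (cases "k = 0")
    case True
    then have "card ?Qs * card ?Ys = 4 * (n - 4)" using cQ cY by simp
    then show ?thesis using n by simp
  next
    case False
    then have "k = 1" using k1 by simp
    then have "card ?Qs * card ?Ys = 2 * (n - 3)" using cQ cY by simp
    then show ?thesis by simp
  qed
  then show ?thesis using main by linarith
qed

lemma lb1_ge:
  assumes n: "5 \<le> n"
  shows "2 * (n - 3) \<le> lb1 (johnson_V n) (johnson_E n) {}"
proof -
  let ?V = "johnson_V n"
  have "2 * 2 \<le> n * (n - 1)" by (rule mult_le_mono) (use n in auto)
  then have c: "2 \<le> card ?V" unfolding card_jV choose_two by presburger
  have "lb1 ?V (johnson_E n) {} = Min {max_red_deg (johnson_E n) {} (pair_partition ?V u v) | u v. u \<in> ?V \<and> v \<in> ?V \<and> u \<noteq> v}"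
    using c unfolding lb1_def by simp
  also have "2 * (n - 3) \<le> \<dots>"
  proof (rule Min.boundedI[OF finite_lb1_set[OF finite_jV]])
    have "{1, 2} \<in> ?V" "{1, 3} \<in> ?V" "{1, 2} \<noteq> ({1, 3} :: nat set)" using n by (auto intro: pair_in simp: doubleton_eq_iff)
    then show "{max_red_deg (johnson_E n) {} (pair_partition ?V u v) | u v. u \<in> ?V \<and> v \<in> ?V \<and> u \<noteq> v} \<noteq> {}" by blast
    fix a assume "a \<in> {max_red_deg (johnson_E n) {} (pair_partition ?V u v) | u v. u \<in> ?V \<and> v \<in> ?V \<and> u \<noteq> v}"
    then obtain u v where uv: "u \<in> ?V" "v \<in> ?V" "u \<noteq> v" "a = max_red_deg (johnson_E n) {} (pair_partition ?V u v)" by blast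
    have "2 * (n - 3) \<le> quot_red_deg (johnson_E n) {} (pair_partition ?V u v) {u, v}"
      by (rule red_pair_lb[OF n uv(1-3)])
    also have "\<dots> \<le> a" unfolding uv(4) max_red_deg_def
      by (rule Max_ge) (auto simp: pair_partition_def finite_jV)
    finally show "2 * (n - 3) \<le> a" .
  qed
  finally show ?thesis .
qed


lemma red0_crit:
  assumes "\<And>U W. U \<in> P \<Longrightarrow> W \<in> P \<Longrightarrow> U \<noteq> W \<Longrightarrow> (\<forall>u\<in>U. \<forall>w\<in>W. {u, w} \<in> B) \<or> (\<forall>u\<in>U. \<forall>w\<in>W. {u, w} \<notin> B)"
  shows "max_red_deg B {} P = 0"
proof -
  have "quot_red_deg B {} P U = 0" for U
  proof -
    have "{W. quot_red_adj B {} P U W} = {}" using assms unfolding quot_red_adj_def by fastforce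
    then show ?thesis unfolding quot_red_deg_def by (metis card.empty)
  qed
  then show ?thesis unfolding max_red_deg_def by (simp add: image_constant_conv)
qed

lemma red0_sc:
  assumes sc: "\<And>u. u \<in> V \<Longrightarrow> (\<forall>u'\<in>V. g u' = g u \<longrightarrow> u' = u) \<or> (\<forall>u'\<in>V. g u' = g u \<longrightarrow> (\<forall>w\<in>V. g w \<noteq> g u \<longrightarrow> {u', w} \<in> B))"
  shows "max_red_deg B {} (part V g) = 0"
proof (rule red0_crit)
  fix U W assume U: "U \<in> part V g" and W: "W \<in> part V g" and UW: "U \<noteq> W"
  obtain u where u: "u \<in> V" "U = cls V g u" using U unfolding part_def by auto
  obtain w where w: "w \<in> V" "W = cls V g w" using W unfolding part_def by auto
  have ne: "g u \<noteq> g w" using UW u w cls_eq_iff[OF u(1) w(1), of g] by simp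
  show "(\<forall>x\<in>U. \<forall>y\<in>W. {x, y} \<in> B) \<or> (\<forall>x\<in>U. \<forall>y\<in>W. {x, y} \<notin> B)"
  proof (cases "\<forall>u'\<in>V. g u' = g u \<longrightarrow> u' = u")
    case su: True
    show ?thesis
    proof (cases "\<forall>w'\<in>V. g w' = g w \<longrightarrow> w' = w")
      case sw: True
      have "U = {u}" "W = {w}" using su sw u w unfolding cls_def by auto
      then show ?thesis by auto
    next
      case False
      then have cw: "\<forall>w'\<in>V. g w' = g w \<longrightarrow> (\<forall>x\<in>V. g x \<noteq> g w \<longrightarrow> {w', x} \<in> B)" using sc[OF w(1)] by blast
      have "\<forall>x\<in>U. \<forall>y\<in>W. {x, y} \<in> B"
      proof (intro ballI)
        fix x y assume "x \<in> U" "y \<in> W"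
        then have "x \<in> V" "g x = g u" "y \<in> V" "g y = g w" using u w unfolding cls_def by auto
        then have "{y, x} \<in> B" using cw ne by auto
        then show "{x, y} \<in> B" by (simp add: insert_commute)
      qed
      then show ?thesis by blast
    qed
  next
    case False
    then have cu: "\<forall>u'\<in>V. g u' = g u \<longrightarrow> (\<forall>x\<in>V. g x \<noteq> g u \<longrightarrow> {u', x} \<in> B)" using sc[OF u(1)] by blast
    have "\<forall>x\<in>U. \<forall>y\<in>W. {x, y} \<in> B"
    proof (intro ballI)
      fix x y assume "x \<in> U" "y \<in> W"
      then have "x \<in> V" "g x = g u" "y \<in> V" "g y = g w" using u w unfolding cls_def by auto
      then show "{x, y} \<in> B" using cu ne by auto
    qed
    then show ?thesis by blast
  qed
qed

lemma complete_red0: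
  assumes P: "partition_on V P" and c: "\<And>u w. u \<in> V \<Longrightarrow> w \<in> V \<Longrightarrow> u \<noteq> w \<Longrightarrow> {u, w} \<in> B"
  shows "max_red_deg B {} P = 0"
proof (rule red0_crit)
  fix U W assume U: "U \<in> P" and W: "W \<in> P" and UW: "U \<noteq> W"
  have d: "U \<inter> W = {}" using P U W UW unfolding partition_on_def disjoint_def by blast
  have s: "U \<subseteq> V" "W \<subseteq> V" using P U W unfolding partition_on_def by auto
  have "\<forall>u\<in>U. \<forall>w\<in>W. {u, w} \<in> B"
  proof (intro ballI)
    fix u w assume "u \<in> U" "w \<in> W"
    then show "{u, w} \<in> B" using c s d by blast
  qed
  then show "(\<forall>u\<in>U. \<forall>w\<in>W. {u, w} \<in> B) \<or> (\<forall>u\<in>U. \<forall>w\<in>W. {u, w} \<notin> B)" by blast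
qed

lemma V2: "johnson_V 2 = {{1, 2}}"
proof
  show "johnson_V 2 \<subseteq> {{1, 2}}"
  proof
    fix v assume "v \<in> johnson_V 2"
    then obtain a b where "v = {a, b}" "1 \<le> a" "a < b" "b \<le> (2::nat)" using jV by blast
    then have "a = 1" "b = 2" by auto
    then show "v \<in> {{1, 2}}" using \<open>v = {a, b}\<close> by simp
  qed
  show "{{1, 2}} \<subseteq> johnson_V 2" using pair_in[of 1 2 2] by simp
qed

lemma tww2: "tww (johnson_V 2) (johnson_E 2) {} = 0"
proof -
  let ?ps = "[singleton_partition (johnson_V 2)]"
  have sp: "singleton_partition (johnson_V 2) = {johnson_V 2}" unfolding V2 singleton_partition_def by simp
  have "contraction_seq (johnson_V 2) ?ps"
    unfolding contraction_seq_def using sp by (simp add: V2 partition_on_space)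
  moreover have "seq_width (johnson_E 2) {} ?ps = 0"
    unfolding seq_width_def sp by (simp add: max_red_deg_single)
  ultimately have "tww (johnson_V 2) (johnson_E 2) {} \<le> 0" using tww_le by metis
  then show ?thesis by simp
qed

lemma complete3: "u \<in> johnson_V 3 \<Longrightarrow> w \<in> johnson_V 3 \<Longrightarrow> u \<noteq> w \<Longrightarrow> {u, w} \<in> johnson_E 3"
proof -
  assume u: "u \<in> johnson_V 3" and w: "w \<in> johnson_V 3" and uw: "u \<noteq> w"
  obtain a b where 1: "u = {a, b}" "1 \<le> a" "a < b" "b \<le> (3::nat)" using jV u by blast
  obtain c d where 2: "w = {c, d}" "1 \<le> c" "c < d" "d \<le> (3::nat)" using jV w by blast
  have "\<not> (a = c \<and> b = d)" using uw 1 2 by auto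
  then have "adjp a b c d" using 1 2 unfolding adjp_def by arith
  then have "card (u \<inter> w) = 1" using card_int_adjp[OF 1(3) 2(3)] 1 2 by simp
  then show "{u, w} \<in> johnson_E 3" using u w jE by blast
qed

lemma tww3: "tww (johnson_V 3) (johnson_E 3) {} = 0"
proof -
  have cs: "contraction_seq (johnson_V 3) (pss 3)" by (rule pss_valid) simp
  have "max_red_deg (johnson_E 3) {} P = 0" if "P \<in> set (pss 3)" for P
    by (rule complete_red0[OF _ complete3]) (use cs that in \<open>auto simp: contraction_seq_def\<close>)
  then have "seq_width (johnson_E 3) {} (pss 3) = 0" unfolding seq_width_def
    by (simp add: Max_eq_iff image_constant_conv)
  then have "tww (johnson_V 3) (johnson_E 3) {} \<le> 0" using tww_le[OF cs] by metis
  then show ?thesis by simp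
qed


definition cl :: "nat \<Rightarrow> nat \<Rightarrow> nat" where
  "cl a b = (if a = 1 then b else 9 - a - b)"

definition G :: "nat \<Rightarrow> nat \<Rightarrow> nat \<Rightarrow> nat" where
  "G t a b = (if t = 0 then 10 * a + b
     else if t = 1 then (if cl a b = 2 then 0 else 10 * a + b)
     else if t = 2 then (if cl a b = 2 then 0 else if cl a b = 3 then 1 else 10 * a + b)
     else if t = 3 then cl a b
     else if t = 4 then (if cl a b = 4 then 4 else 2) else 0)"

definition g4 :: "nat \<Rightarrow> nat set \<Rightarrow> nat" where
  "g4 t v = G t (Min v) (Max v)"

definition cl' :: "nat set \<Rightarrow> nat" where
  "cl' v = cl (Min v) (Max v)"

lemma V4: "johnson_V 4 = {{1, 2}, {1, 3}, {1, 4}, {2, 3}, {2, 4}, {3, 4}}"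
proof
  show "johnson_V 4 \<subseteq> {{1, 2}, {1, 3}, {1, 4}, {2, 3}, {2, 4}, {3, 4}}"
  proof
    fix v assume "v \<in> johnson_V 4"
    then obtain a b where ab: "v = {a, b}" "1 \<le> a" "a < b" "b \<le> (4::nat)" using jV by blast
    then have "(a = 1 \<and> b = 2) \<or> (a = 1 \<and> b = 3) \<or> (a = 1 \<and> b = 4) \<or> (a = 2 \<and> b = 3) \<or> (a = 2 \<and> b = 4) \<or> (a = 3 \<and> b = 4)"
      by arith
    then show "v \<in> {{1, 2}, {1, 3}, {1, 4}, {2, 3}, {2, 4}, {3, 4}}" using ab(1) by auto
  qed
  show "{{1, 2}, {1, 3}, {1, 4}, {2, 3}, {2, 4}, {3, 4}} \<subseteq> johnson_V 4"
    by (auto intro!: pair_in)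
qed

definition S4 :: "(nat \<times> nat) set" where
  "S4 = {(1, 2), (1, 3), (1, 4), (2, 3), (2, 4), (3, 4)}"

lemma pairs4: "1 \<le> a \<Longrightarrow> a < b \<Longrightarrow> b \<le> (4::nat) \<Longrightarrow> (a, b) \<in> S4"
proof -
  assume "1 \<le> a" "a < b" "b \<le> (4::nat)"
  then have "(a = 1 \<and> b = 2) \<or> (a = 1 \<and> b = 3) \<or> (a = 1 \<and> b = 4) \<or> (a = 2 \<and> b = 3) \<or> (a = 2 \<and> b = 4) \<or> (a = 3 \<and> b = 4)"
    by arith
  then show ?thesis unfolding S4_def by auto
qed

lemma S4_V: "(a, b) \<in> S4 \<Longrightarrow> {a, b} \<in> johnson_V 4 \<and> a < b"
  unfolding S4_def by (auto intro: pair_in)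

lemma V4_S: "u \<in> johnson_V 4 \<Longrightarrow> \<exists>a b. u = {a, b} \<and> a < b \<and> (a, b) \<in> S4"
  using jV[of u 4] pairs4 by blast

lemma adj4n: "(a, b) \<in> S4 \<Longrightarrow> (c, d) \<in> S4 \<Longrightarrow> adjp a b c d \<longleftrightarrow> cl a b \<noteq> cl c d"
  unfolding S4_def by (elim insertE; simp add: adjp_def cl_def)

lemma adj4:
  assumes u: "u \<in> johnson_V 4" and w: "w \<in> johnson_V 4"
  shows "{u, w} \<in> johnson_E 4 \<longleftrightarrow> cl' u \<noteq> cl' w"
proof -
  obtain a b where 1: "u = {a, b}" "a < b" "(a, b) \<in> S4" using V4_S[OF u] by blast
  obtain c d where 2: "w = {c, d}" "c < d" "(c, d) \<in> S4" using V4_S[OF w] by blast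
  have "adjp a b c d \<longleftrightarrow> cl a b \<noteq> cl c d" by (rule adj4n[OF 1(3) 2(3)])
  then show ?thesis using u w jE card_int_adjp[OF 1(2) 2(2)] 1 2 unfolding cl'_def by simp
qed

lemma sc4n:
  assumes t: "t < 6" and ab: "(a, b) \<in> S4"
  shows "(\<forall>(c, d)\<in>S4. G t c d = G t a b \<longrightarrow> c = a \<and> d = b) \<or>
    (\<forall>(c, d)\<in>S4. G t c d = G t a b \<longrightarrow> (\<forall>(e, f)\<in>S4. G t e f \<noteq> G t a b \<longrightarrow> cl c d \<noteq> cl e f))"
proof -
  have "t = 0 \<or> t = 1 \<or> t = 2 \<or> t = 3 \<or> t = 4 \<or> t = 5" using t by arith
  then show ?thesis using ab unfolding S4_def
    by (elim disjE insertE; simp add: G_def cl_def)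
qed

lemma sc4:
  assumes t: "t < 6" and u: "u \<in> johnson_V 4"
  shows "(\<forall>u'\<in>johnson_V 4. g4 t u' = g4 t u \<longrightarrow> u' = u) \<or>
    (\<forall>u'\<in>johnson_V 4. g4 t u' = g4 t u \<longrightarrow> (\<forall>w\<in>johnson_V 4. g4 t w \<noteq> g4 t u \<longrightarrow> {u', w} \<in> johnson_E 4))"
proof -
  obtain a b where 1: "u = {a, b}" "a < b" "(a, b) \<in> S4" using V4_S[OF u] by blast
  have gu: "g4 t u = G t a b" using 1 unfolding g4_def by simp
  consider (s) "\<forall>(c, d)\<in>S4. G t c d = G t a b \<longrightarrow> c = a \<and> d = b"
    | (c) "\<forall>(c, d)\<in>S4. G t c d = G t a b \<longrightarrow> (\<forall>(e, f)\<in>S4. G t e f \<noteq> G t a b \<longrightarrow> cl c d \<noteq> cl e f)"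
    using sc4n[OF t 1(3)] by blast
  then show ?thesis
  proof cases
    case s
    have "\<forall>u'\<in>johnson_V 4. g4 t u' = g4 t u \<longrightarrow> u' = u"
    proof (intro ballI impI)
      fix u' assume u': "u' \<in> johnson_V 4" and e: "g4 t u' = g4 t u"
      obtain c d where 2: "u' = {c, d}" "c < d" "(c, d) \<in> S4" using V4_S[OF u'] by blast
      have "G t c d = G t a b" using e gu 2 unfolding g4_def by simp
      then have "c = a \<and> d = b" using s 2(3) by blast
      then show "u' = u" using 1 2 by simp
    qed
    then show ?thesis by blast
  next
    case c
    have "\<forall>u'\<in>johnson_V 4. g4 t u' = g4 t u \<longrightarrow> (\<forall>w\<in>johnson_V 4. g4 t w \<noteq> g4 t u \<longrightarrow> {u', w} \<in> johnson_E 4)"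
    proof (intro ballI impI)
      fix u' w assume u': "u' \<in> johnson_V 4" and e: "g4 t u' = g4 t u" and w: "w \<in> johnson_V 4" and e2: "g4 t w \<noteq> g4 t u"
      obtain c d where 2: "u' = {c, d}" "c < d" "(c, d) \<in> S4" using V4_S[OF u'] by blast
      obtain e f where 3: "w = {e, f}" "e < f" "(e, f) \<in> S4" using V4_S[OF w] by blast
      have "G t c d = G t a b" "G t e f \<noteq> G t a b" using e e2 gu 2 3 unfolding g4_def by simp_all
      then have "cl c d \<noteq> cl e f" using c 2(3) 3(3) by blast
      then have "cl' u' \<noteq> cl' w" using 2 3 unfolding cl'_def by simp
      then show "{u', w} \<in> johnson_E 4" using adj4[OF u' w] by simp
    qed
    then show ?thesis by blast
  qed
qed


lemma merge4n_0: "(a, b) \<in> S4 \<Longrightarrow> (c, d) \<in> S4 \<Longrightarrow>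
  (G 1 a b = G 1 c d) = (G 0 a b = G 0 c d \<or> (G 0 a b = 12 \<and> G 0 c d = 34) \<or> (G 0 a b = 34 \<and> G 0 c d = 12))"
  unfolding S4_def by (elim insertE; simp add: G_def cl_def)

lemma merge4_0: "merge_step (part (johnson_V 4) (g4 0)) (part (johnson_V 4) (g4 1))"
proof (rule part_merge[where a="{1, 2}" and b="{3, 4}"])
  show "{1, 2} \<in> johnson_V 4" "{3, 4} \<in> johnson_V 4" by (auto intro: pair_in)
  have k: "g4 0 {1, 2} = 12" "g4 0 {3, 4} = 34" by (simp_all add: g4_def G_def cl_def)
  then show "g4 0 {1, 2} \<noteq> g4 0 {3, 4}" by simp
  fix u v assume u: "u \<in> johnson_V 4" and v: "v \<in> johnson_V 4"
  obtain a b where 1: "u = {a, b}" "a < b" "(a, b) \<in> S4" using V4_S[OF u] by blast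
  obtain c d where 2: "v = {c, d}" "c < d" "(c, d) \<in> S4" using V4_S[OF v] by blast
  show "(g4 1 u = g4 1 v) = (g4 0 u = g4 0 v \<or> (g4 0 u = g4 0 {1, 2} \<and> g4 0 v = g4 0 {3, 4}) \<or> (g4 0 u = g4 0 {3, 4} \<and> g4 0 v = g4 0 {1, 2}))"
    unfolding k using merge4n_0[OF 1(3) 2(3)] 1 2 unfolding g4_def by simp
qed

lemma merge4n_1: "(a, b) \<in> S4 \<Longrightarrow> (c, d) \<in> S4 \<Longrightarrow>
  (G 2 a b = G 2 c d) = (G 1 a b = G 1 c d \<or> (G 1 a b = 13 \<and> G 1 c d = 24) \<or> (G 1 a b = 24 \<and> G 1 c d = 13))"
  unfolding S4_def by (elim insertE; simp add: G_def cl_def)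

lemma merge4_1: "merge_step (part (johnson_V 4) (g4 1)) (part (johnson_V 4) (g4 2))"
proof (rule part_merge[where a="{1, 3}" and b="{2, 4}"])
  show "{1, 3} \<in> johnson_V 4" "{2, 4} \<in> johnson_V 4" by (auto intro: pair_in)
  have k: "g4 1 {1, 3} = 13" "g4 1 {2, 4} = 24" by (simp_all add: g4_def G_def cl_def)
  then show "g4 1 {1, 3} \<noteq> g4 1 {2, 4}" by simp
  fix u v assume u: "u \<in> johnson_V 4" and v: "v \<in> johnson_V 4"
  obtain a b where 1: "u = {a, b}" "a < b" "(a, b) \<in> S4" using V4_S[OF u] by blast
  obtain c d where 2: "v = {c, d}" "c < d" "(c, d) \<in> S4" using V4_S[OF v] by blast
  show "(g4 2 u = g4 2 v) = (g4 1 u = g4 1 v \<or> (g4 1 u = g4 1 {1, 3} \<and> g4 1 v = g4 1 {2, 4}) \<or> (g4 1 u = g4 1 {2, 4} \<and> g4 1 v = g4 1 {1, 3}))"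
    unfolding k using merge4n_1[OF 1(3) 2(3)] 1 2 unfolding g4_def by simp
qed

lemma merge4n_2: "(a, b) \<in> S4 \<Longrightarrow> (c, d) \<in> S4 \<Longrightarrow>
  (G 3 a b = G 3 c d) = (G 2 a b = G 2 c d \<or> (G 2 a b = 14 \<and> G 2 c d = 23) \<or> (G 2 a b = 23 \<and> G 2 c d = 14))"
  unfolding S4_def by (elim insertE; simp add: G_def cl_def)

lemma merge4_2: "merge_step (part (johnson_V 4) (g4 2)) (part (johnson_V 4) (g4 3))"
proof (rule part_merge[where a="{1, 4}" and b="{2, 3}"])
  show "{1, 4} \<in> johnson_V 4" "{2, 3} \<in> johnson_V 4" by (auto intro: pair_in)
  have k: "g4 2 {1, 4} = 14" "g4 2 {2, 3} = 23" by (simp_all add: g4_def G_def cl_def)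
  then show "g4 2 {1, 4} \<noteq> g4 2 {2, 3}" by simp
  fix u v assume u: "u \<in> johnson_V 4" and v: "v \<in> johnson_V 4"
  obtain a b where 1: "u = {a, b}" "a < b" "(a, b) \<in> S4" using V4_S[OF u] by blast
  obtain c d where 2: "v = {c, d}" "c < d" "(c, d) \<in> S4" using V4_S[OF v] by blast
  show "(g4 3 u = g4 3 v) = (g4 2 u = g4 2 v \<or> (g4 2 u = g4 2 {1, 4} \<and> g4 2 v = g4 2 {2, 3}) \<or> (g4 2 u = g4 2 {2, 3} \<and> g4 2 v = g4 2 {1, 4}))"
    unfolding k using merge4n_2[OF 1(3) 2(3)] 1 2 unfolding g4_def by simp
qed

lemma merge4n_3: "(a, b) \<in> S4 \<Longrightarrow> (c, d) \<in> S4 \<Longrightarrow>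
  (G 4 a b = G 4 c d) = (G 3 a b = G 3 c d \<or> (G 3 a b = 2 \<and> G 3 c d = 3) \<or> (G 3 a b = 3 \<and> G 3 c d = 2))"
  unfolding S4_def by (elim insertE; simp add: G_def cl_def)

lemma merge4_3: "merge_step (part (johnson_V 4) (g4 3)) (part (johnson_V 4) (g4 4))"
proof (rule part_merge[where a="{1, 2}" and b="{1, 3}"])
  show "{1, 2} \<in> johnson_V 4" "{1, 3} \<in> johnson_V 4" by (auto intro: pair_in)
  have k: "g4 3 {1, 2} = 2" "g4 3 {1, 3} = 3" by (simp_all add: g4_def G_def cl_def)
  then show "g4 3 {1, 2} \<noteq> g4 3 {1, 3}" by simp
  fix u v assume u: "u \<in> johnson_V 4" and v: "v \<in> johnson_V 4"
  obtain a b where 1: "u = {a, b}" "a < b" "(a, b) \<in> S4" using V4_S[OF u] by blast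
  obtain c d where 2: "v = {c, d}" "c < d" "(c, d) \<in> S4" using V4_S[OF v] by blast
  show "(g4 4 u = g4 4 v) = (g4 3 u = g4 3 v \<or> (g4 3 u = g4 3 {1, 2} \<and> g4 3 v = g4 3 {1, 3}) \<or> (g4 3 u = g4 3 {1, 3} \<and> g4 3 v = g4 3 {1, 2}))"
    unfolding k using merge4n_3[OF 1(3) 2(3)] 1 2 unfolding g4_def by simp
qed

lemma merge4n_4: "(a, b) \<in> S4 \<Longrightarrow> (c, d) \<in> S4 \<Longrightarrow>
  (G 5 a b = G 5 c d) = (G 4 a b = G 4 c d \<or> (G 4 a b = 2 \<and> G 4 c d = 4) \<or> (G 4 a b = 4 \<and> G 4 c d = 2))"
  unfolding S4_def by (elim insertE; simp add: G_def cl_def)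

lemma merge4_4: "merge_step (part (johnson_V 4) (g4 4)) (part (johnson_V 4) (g4 5))"
proof (rule part_merge[where a="{1, 2}" and b="{1, 4}"])
  show "{1, 2} \<in> johnson_V 4" "{1, 4} \<in> johnson_V 4" by (auto intro: pair_in)
  have k: "g4 4 {1, 2} = 2" "g4 4 {1, 4} = 4" by (simp_all add: g4_def G_def cl_def)
  then show "g4 4 {1, 2} \<noteq> g4 4 {1, 4}" by simp
  fix u v assume u: "u \<in> johnson_V 4" and v: "v \<in> johnson_V 4"
  obtain a b where 1: "u = {a, b}" "a < b" "(a, b) \<in> S4" using V4_S[OF u] by blast
  obtain c d where 2: "v = {c, d}" "c < d" "(c, d) \<in> S4" using V4_S[OF v] by blast
  show "(g4 5 u = g4 5 v) = (g4 4 u = g4 4 v \<or> (g4 4 u = g4 4 {1, 2} \<and> g4 4 v = g4 4 {1, 4}) \<or> (g4 4 u = g4 4 {1, 4} \<and> g4 4 v = g4 4 {1, 2}))"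
    unfolding k using merge4n_4[OF 1(3) 2(3)] 1 2 unfolding g4_def by simp
qed

lemma merge4: "t < 5 \<Longrightarrow> merge_step (part (johnson_V 4) (g4 t)) (part (johnson_V 4) (g4 (Suc t)))"
proof -
  assume "t < 5"
  then have "t = 0 \<or> t = 1 \<or> t = 2 \<or> t = 3 \<or> t = 4" by arith
  then show ?thesis using merge4_0 merge4_1 merge4_2 merge4_3 merge4_4 by (elim disjE) (simp_all add: eval_nat_numeral)
qed

definition ps4 :: "nat set set set list" where
  "ps4 = map (\<lambda>t. part (johnson_V 4) (g4 t)) [0..<6]"

lemma inj4: "inj_on (g4 0) (johnson_V 4)"
proof (rule inj_onI)
  fix u v assume u: "u \<in> johnson_V 4" and v: "v \<in> johnson_V 4" and e: "g4 0 u = g4 0 v"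
  obtain a b where 1: "u = {a, b}" "a < b" "(a, b) \<in> S4" using V4_S[OF u] by blast
  obtain c d where 2: "v = {c, d}" "c < d" "(c, d) \<in> S4" using V4_S[OF v] by blast
  have "G 0 a b = G 0 c d" using e 1 2 unfolding g4_def by simp
  then have "a = c \<and> b = d" using 1(3) 2(3) unfolding S4_def by (elim insertE; simp add: G_def)
  then show "u = v" using 1 2 by simp
qed

lemma ps4_valid: "contraction_seq (johnson_V 4) ps4"
proof -
  have len: "length ps4 = card (johnson_V 4)" unfolding ps4_def card_jV by (simp add: choose_two)
  have parts: "\<forall>P\<in>set ps4. partition_on (johnson_V 4) P" unfolding ps4_def by (auto simp: part_partition)
  have first: "ps4 ! 0 = singleton_partition (johnson_V 4)"
    unfolding ps4_def using part_inj[OF inj4] by simp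
  have steps: "\<forall>i. Suc i < length ps4 \<longrightarrow> merge_step (ps4 ! i) (ps4 ! Suc i)"
  proof (intro allI impI)
    fix i assume "Suc i < length ps4"
    then have i: "i < 5" unfolding ps4_def by simp
    then have "ps4 ! i = part (johnson_V 4) (g4 i)" "ps4 ! Suc i = part (johnson_V 4) (g4 (Suc i))"
      unfolding ps4_def by (simp_all add: nth_map)
    then show "merge_step (ps4 ! i) (ps4 ! Suc i)" using merge4[OF i] by simp
  qed
  show ?thesis unfolding contraction_seq_def using len parts first steps by blast
qed

lemma ps4_width: "seq_width (johnson_E 4) {} ps4 = 0"
proof -
  have "max_red_deg (johnson_E 4) {} P = 0" if P: "P \<in> set ps4" for P
  proof -
    obtain t where t: "t < 6" "P = part (johnson_V 4) (g4 t)" using P unfolding ps4_def by auto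
    show ?thesis unfolding t(2) by (rule red0_sc) (rule sc4[OF t(1)])
  qed
  then show ?thesis unfolding seq_width_def by (simp add: Max_eq_iff image_constant_conv)
qed

lemma tww4: "tww (johnson_V 4) (johnson_E 4) {} = 0"
  using tww_le[OF ps4_valid, of "johnson_E 4" "{}"] ps4_width by simp


lemma card_ge2: "3 \<le> n \<Longrightarrow> 2 \<le> card (johnson_V n)"
proof -
  assume n: "3 \<le> n"
  have "3 * 2 \<le> n * (n - 1)" by (rule mult_le_mono) (use n in auto)
  then show ?thesis unfolding card_jV choose_two by presburger
qed

theorem mainTheorem6:
  fixes n :: nat
  assumes "n \<ge> 2"
  shows "tww (johnson_V n) (johnson_E n) {} = lb1 (johnson_V n) (johnson_E n) {}
       \<and> lb1 (johnson_V n) (johnson_E n) {} = (if n \<ge> 5 then 2 * (n - 3) else 0)"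
proof (cases "n \<ge> 5")
  case True
  have up: "tww (johnson_V n) (johnson_E n) {} \<le> 2 * (n - 3)"
    using tww_le[OF pss_valid, of n "johnson_E n" "{}"] pss_width[OF True] True by simp
  have lo: "2 * (n - 3) \<le> lb1 (johnson_V n) (johnson_E n) {}" by (rule lb1_ge[OF True])
  have mid: "lb1 (johnson_V n) (johnson_E n) {} \<le> tww (johnson_V n) (johnson_E n) {}"
    by (rule lb1_le_tww[OF finite_jV card_ge2 pss_valid]) (use True in simp_all)
  show ?thesis using up lo mid True by simp
next
  case False
  then have "n = 2 \<or> n = 3 \<or> n = 4" using assms by arith
  then consider "n = 2" | "n = 3" | "n = 4" by blast
  then show ?thesis
  proof cases
    case 1
    have "card (johnson_V n) = 1" unfolding 1 V2 by simp
    then have "lb1 (johnson_V n) (johnson_E n) {} = 0" unfolding lb1_def by simp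
    then show ?thesis using tww2 1 by simp
  next
    case 2
    have "lb1 (johnson_V 3) (johnson_E 3) {} \<le> tww (johnson_V 3) (johnson_E 3) {}"
      by (rule lb1_le_tww[OF finite_jV card_ge2 pss_valid]) simp_all
    then show ?thesis using tww3 2 by simp
  next
    case 3
    have "lb1 (johnson_V 4) (johnson_E 4) {} \<le> tww (johnson_V 4) (johnson_E 4) {}"
      by (rule lb1_le_tww[OF finite_jV card_ge2 ps4_valid]) simp
    then show ?thesis using tww4 3 by simp
  qed
qed


end
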